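(* Let $\sigma\in S_n$ and let $f_\sigma=x_1\cdots x_n-x_{\sigma(1)}\cdots x_{\sigma(n)}$ in the free associative algebra. For $i\in\{1,\dots,n\}$ let $T_i(f_\sigma)=f_\sigma(x_1,\dots,x_{i-1},x_ix_{i+1},x_{i+2},\dots,x_{n+1})$. Then $T_i(f_\sigma)=x_1\cdots x_{n+1}-x_{\tau(1)}\cdots x_{\tau(n+1)}$ where $\tau=\hat s_{i+1}\,\sigma\,\hat s_{\sigma^{-1}(i)+1}^{-1}\in S_{n+1}$, with $\sigma$ regarded as the element of $S_{n+1}$ fixing $n+1$.
   Context: For $1\le m\le n+1$, $\hat s_m\in S_{n+1}$ denotes the cycle $(m,m+1,\ldots,n+1)$ (so $\hat s_{n+1}$ is the identity). Products of permutations are compositions of functions. *)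

theory Defs
  imports Main "HOL-Library.Poly_Mapping" "HOL-Combinatorics.Permutations"
begin

text \<open>Free associative algebra over a commutative ring 'a on variables x_1, x_2, ...
  (indexed by nat): finitely supported 'a-linear combinations of words (monomials),
  a word being a list of variable indices.\<close>
type_synonym 'a free_alg = "nat list \<Rightarrow>\<^sub>0 'a"

definition monom_w :: "nat list \<Rightarrow> 'a::comm_ring_1 free_alg" where
  "monom_w w = Poly_Mapping.single w 1"

definition subst_alg :: "(nat \<Rightarrow> nat list) \<Rightarrow> 'a::comm_ring_1 free_alg \<Rightarrow> 'a free_alg" where
  "subst_alg phi p = (\<Sum>w\<in>Poly_Mapping.keys p. Poly_Mapping.single (concat (map phi w)) (Poly_Mapping.lookup p w))"

definition f_perm :: "nat \<Rightarrow> (nat \<Rightarrow> nat) \<Rightarrow> 'a::comm_ring_1 free_alg" where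
  "f_perm n \<sigma> = monom_w [1..<n+1] - monom_w (map \<sigma> [1..<n+1])"

definition T_op :: "nat \<Rightarrow> 'a::comm_ring_1 free_alg \<Rightarrow> 'a free_alg" where
  "T_op i = subst_alg (\<lambda>j. if j < i then [j] else if j = i then [i, i+1] else [j+1])"

definition cyc :: "nat \<Rightarrow> nat \<Rightarrow> nat \<Rightarrow> nat" where
  "cyc N m k = (if m \<le> k \<and> k < N then k + 1 else if k = N then m else k)"

end

theory Submission imports Defs begin

lemma split_upt: "a \<le> j \<Longrightarrow> j < b \<Longrightarrow> [a..<b] = [a..<j] @ j # [j+1..<b]"
proof -
  assume a: "a \<le> j" "j < b"
  have "[a..<b] = [a..<j+(b-j)]" using a by simp
  also have "\<dots> = [a..<j] @ [j..<j+(b-j)]" by (rule upt_add_eq_append[OF a(1)])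
  also have "[j..<j+(b-j)] = j # [j+1..<b]" using a by (simp add: upt_conv_Cons)
  finally show ?thesis .
qed

lemma concat_single: "(\<And>x. x\<in>set xs \<Longrightarrow> f x = [g x]) \<Longrightarrow> concat (map f xs) = map g xs"
  by (induct xs) auto

lemma subst_alg_general:
  assumes "finite S" "Poly_Mapping.keys p \<subseteq> S"
  shows "subst_alg phi p = (\<Sum>w\<in>S. Poly_Mapping.single (concat (map phi w)) (Poly_Mapping.lookup p w))"
  unfolding subst_alg_def
  by (rule sum.mono_neutral_left) (use assms in \<open>auto simp: in_keys_iff\<close>)

lemma subst_alg_diff:
  "subst_alg phi (monom_w w - monom_w v :: 'a::comm_ring_1 free_alg)
    = monom_w (concat (map phi w)) - monom_w (concat (map phi v))"
proof (cases "w = v")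
  case True
  then show ?thesis by (simp add: subst_alg_def)
next
  case False
  have "subst_alg phi (monom_w w - monom_w v :: 'a free_alg) =
     (\<Sum>u\<in>{w,v}. Poly_Mapping.single (concat (map phi u)) (Poly_Mapping.lookup (monom_w w - monom_w v :: 'a free_alg) u))"
    by (rule subst_alg_general) (auto simp: monom_w_def in_keys_iff lookup_minus lookup_single)
  also have "\<dots> = monom_w (concat (map phi w)) - monom_w (concat (map phi v))"
    using False by (simp add: monom_w_def lookup_minus lookup_single single_uminus)
  finally show ?thesis .
qed

lemma cyc_inj: "m \<le> N \<Longrightarrow> inj (cyc N m)"
  unfolding inj_def cyc_def by auto

theorem lemma2p6:
  fixes \<sigma> :: "nat \<Rightarrow> nat" and n i :: nat
  assumes "\<sigma> permutes {1..n}"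
    and "i \<in> {1..n}"
  shows "(T_op i (f_perm n \<sigma>) :: 'a::comm_ring_1 free_alg)
           = monom_w [1..<n+2]
             - monom_w (map (cyc (n+1) (i+1) \<circ> \<sigma> \<circ> inv (cyc (n+1) (inv \<sigma> i + 1))) [1..<n+2])"
proof -
  define phi where "phi = (\<lambda>j::nat. if j < i then [j] else if j = i then [i, i+1] else [j+1])"
  define j where "j = inv \<sigma> i"
  define c where "c = cyc (n+1) (j+1)"
  define \<tau> where "\<tau> = cyc (n+1) (i+1) \<circ> \<sigma> \<circ> inv c"
  define g where "g = (\<lambda>k::nat. if k < i then k else k+1)"
  have i1: "1 \<le> i" "i \<le> n" using assms(2) by auto
  have sj: "\<sigma> j = i" unfolding j_def using assms(1) permutes_inverses(1) by fastforce
  have jin: "j \<in> {1..n}" unfolding j_def using assms permutes_in_image permutes_inv by fastforce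
  have sn: "\<sigma> (n+1) = n+1" using assms(1) permutes_not_in by fastforce
  have srange: "\<And>p. p \<in> {1..n} \<Longrightarrow> \<sigma> p \<in> {1..n}" using permutes_in_image[OF assms(1)] by simp
  have sinj: "\<And>p. \<sigma> p = i \<Longrightarrow> p = j" unfolding j_def using permutes_inverses(2)[OF assms(1)] by metis
  have cinj: "inj c" unfolding c_def using jin by (intro cyc_inj) auto
  have tc: "\<And>p. \<tau> (c p) = cyc (n+1) (i+1) (\<sigma> p)" unfolding \<tau>_def using cinj by (simp add: inv_f_f)
  have t1: "\<And>p. p \<in> {1..<j} \<Longrightarrow> \<tau> p = g (\<sigma> p)"
  proof -
    fix p assume p: "p \<in> {1..<j}"
    then have "c p = p" using jin by (auto simp: c_def cyc_def)
    moreover have "\<sigma> p \<noteq> i" using sinj p by auto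
    moreover have "\<sigma> p \<in> {1..n}" using srange p jin by auto
    ultimately show "\<tau> p = g (\<sigma> p)" using tc[of p] i1 by (auto simp: cyc_def g_def)
  qed
  have t2: "\<tau> j = i"
  proof -
    have "c j = j" using jin by (auto simp: c_def cyc_def)
    then show ?thesis using tc[of j] sj i1 by (auto simp: cyc_def)
  qed
  have t3: "\<tau> (j+1) = i+1"
  proof -
    have "c (n+1) = j+1" by (auto simp: c_def cyc_def)
    then show ?thesis using tc[of "n+1"] sn i1 by (auto simp: cyc_def)
  qed
  have t4: "\<And>p. p \<in> {j+1..<n+1} \<Longrightarrow> \<tau> (Suc p) = g (\<sigma> p)"
  proof -
    fix p assume p: "p \<in> {j+1..<n+1}"
    then have "c p = Suc p" using jin by (auto simp: c_def cyc_def)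
    moreover have "\<sigma> p \<noteq> i" using sinj p by auto
    moreover have "\<sigma> p \<in> {1..n}" using srange p jin by auto
    ultimately show "\<tau> (Suc p) = g (\<sigma> p)" using tc[of p] i1 by (auto simp: cyc_def g_def)
  qed
  have A: "concat (map phi [1..<n+1]) = [1..<n+2]"
  proof -
    have "[1..<n+1] = [1..<i] @ i # [i+1..<n+1]" using i1 by (intro split_upt) auto
    moreover have "concat (map phi [1..<i]) = [1..<i]"
      using concat_single[of "[1..<i]" phi id] by (auto simp: phi_def)
    moreover have "concat (map phi [i+1..<n+1]) = map Suc [i+1..<n+1]"
      by (rule concat_single) (auto simp: phi_def)
    moreover have "[1..<n+2] = [1..<i] @ i # [i+1..<n+2]" using i1 by (intro split_upt) auto
    moreover have "[i+1..<n+2] = (i+1) # [i+2..<n+2]" using i1 by (simp add: upt_conv_Cons)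
    ultimately show ?thesis by (simp add: phi_def map_Suc_upt)
  qed
  have B: "concat (map phi (map \<sigma> [1..<n+1])) = map \<tau> [1..<n+2]"
  proof -
    have e1: "[1..<n+1] = [1..<j] @ j # [j+1..<n+1]" using jin by (intro split_upt) auto
    have e2: "[1..<n+2] = [1..<j] @ j # (j+1) # [j+2..<n+2]"
    proof -
      have "[1..<n+2] = [1..<j] @ j # [j+1..<n+2]" using jin by (intro split_upt) auto
      moreover have "[j+1..<n+2] = (j+1) # [j+2..<n+2]" using jin by (simp add: upt_conv_Cons)
      ultimately show ?thesis by simp
    qed
    have c1: "concat (map phi (map \<sigma> [1..<j])) = map \<tau> [1..<j]"
      unfolding map_map
      by (rule concat_single) (use t1 sinj in \<open>auto simp: phi_def g_def\<close>)
    have c2: "concat (map phi (map \<sigma> [j+1..<n+1])) = map \<tau> [j+2..<n+2]"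
    proof -
      have "map \<tau> [j+2..<n+2] = map (\<tau> \<circ> Suc) [j+1..<n+1]"
        unfolding map_map[symmetric] map_Suc_upt by simp
      then show ?thesis unfolding map_map
        by (simp only:) (rule concat_single, use t4 sinj jin in \<open>auto simp: phi_def g_def\<close>)
    qed
    show ?thesis using c1 c2 t2 t3 sj e1 e2 by (simp add: phi_def)
  qed
  show ?thesis
    unfolding T_op_def f_perm_def subst_alg_diff phi_def[symmetric]
    using A B by (simp add: \<tau>_def c_def j_def)
qed

end
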